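(* Let $X$ be a compact, zero-dimensional metric space with a continuous free action of a countable amenable group $G$, and let $(F_n)$ be a Følner sequence of $G$ as in the context. For every $n$ there exists a clopen set $V\subset X$ such that (1) the sets $g(V)$, $g\in F_n$, are pairwise disjoint, and (2) there exists $N\ge n$ with $\bigcup_{g\in F_N}g(V)=X$.
   Context: The Følner sequence $(F_n)$ consists of finite sets with $|F_n\triangle gF_n|/|F_n|\to0$ for all $g$, and is assumed to satisfy $e\in F_n$, $F_n\subset F_{n+1}$ for all $n$, and every $g\in G$ belongs to $F_n$ for all sufficiently large $n$. The action is free if $gx=x$ implies $g=e$. *)

theory Defs
  imports "HOL-Analysis.Analysis" "HOL-Algebra.Group_Action"
begin

definition zero_dimensional :: "'a::topological_space set \<Rightarrow> bool" where
  "zero_dimensional X \<longleftrightarrow>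
     (\<forall>U x. openin (top_of_set X) U \<and> x \<in> U \<longrightarrow>
        (\<exists>V. openin (top_of_set X) V \<and> closedin (top_of_set X) V \<and> x \<in> V \<and> V \<subseteq> U))"

definition symdiff :: "'a set \<Rightarrow> 'a set \<Rightarrow> 'a set" where
  "symdiff A B = (A - B) \<union> (B - A)"

definition foelner_seq :: "('g, 'b) monoid_scheme \<Rightarrow> (nat \<Rightarrow> 'g set) \<Rightarrow> bool" where
  "foelner_seq G F \<longleftrightarrow>
     (\<forall>n. F n \<subseteq> carrier G \<and> finite (F n) \<and> F n \<noteq> {}) \<and>
     (\<forall>g\<in>carrier G.
        (\<lambda>n. real (card (symdiff (F n) ((\<lambda>h. g \<otimes>\<^bsub>G\<^esub> h) ` F n))) / real (card (F n)))
          \<longlonglongrightarrow> 0)"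

definition amenable :: "('g, 'b) monoid_scheme \<Rightarrow> bool" where
  "amenable G \<longleftrightarrow> (\<exists>F. foelner_seq G F)"

definition free_action :: "('g, 'b) monoid_scheme \<Rightarrow> ('g \<Rightarrow> 'a \<Rightarrow> 'a) \<Rightarrow> 'a set \<Rightarrow> bool" where
  "free_action G \<phi> X \<longleftrightarrow> (\<forall>g\<in>carrier G. \<forall>x\<in>X. \<phi> g x = x \<longrightarrow> g = \<one>\<^bsub>G\<^esub>)"

end

theory Submission
  imports Defs
begin

context
  fixes G :: "('g, 'b) monoid_scheme" and \<phi> :: "'g \<Rightarrow> 'a::metric_space \<Rightarrow> 'a"
  assumes grp: "group G"
    and act: "group_action G UNIV \<phi>"
    and cont: "\<forall>g\<in>carrier G. continuous_on UNIV (\<phi> g)"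
begin

lemma phi_one: "\<phi> \<one>\<^bsub>G\<^esub> x = x"
  using fun_cong[OF group_action.id_eq_one[OF act], of x] by simp

lemma phi_comp: "g \<in> carrier G \<Longrightarrow> h \<in> carrier G \<Longrightarrow> \<phi> (g \<otimes>\<^bsub>G\<^esub> h) x = \<phi> g (\<phi> h x)"
  using group_action.composition_rule[OF act] by simp

lemma phi_inv1: "g \<in> carrier G \<Longrightarrow> \<phi> (inv\<^bsub>G\<^esub> g) (\<phi> g x) = x"
  using phi_comp[of "inv\<^bsub>G\<^esub> g" g x] phi_one grp by (simp add: group.l_inv group.inv_closed)

lemma phi_inv2: "g \<in> carrier G \<Longrightarrow> \<phi> g (\<phi> (inv\<^bsub>G\<^esub> g) x) = x"
  using phi_comp[of g "inv\<^bsub>G\<^esub> g" x] phi_one grp by (simp add: group.r_inv group.inv_closed)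

lemma img_eq: "k \<in> carrier G \<Longrightarrow> \<phi> k ` V = \<phi> (inv\<^bsub>G\<^esub> k) -` V"
proof
  assume k: "k \<in> carrier G"
  show "\<phi> k ` V \<subseteq> \<phi> (inv\<^bsub>G\<^esub> k) -` V" using phi_inv1[OF k] by auto
  show "\<phi> (inv\<^bsub>G\<^esub> k) -` V \<subseteq> \<phi> k ` V"
  proof
    fix x assume "x \<in> \<phi> (inv\<^bsub>G\<^esub> k) -` V"
    then have "\<phi> (inv\<^bsub>G\<^esub> k) x \<in> V" by simp
    moreover have "x = \<phi> k (\<phi> (inv\<^bsub>G\<^esub> k) x)" using phi_inv2[OF k] by simp
    ultimately show "x \<in> \<phi> k ` V" by blast
  qed
qed

lemma clopen_img:
  assumes "open V" "closed V" "k \<in> carrier G"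
  shows "open (\<phi> k ` V) \<and> closed (\<phi> k ` V)"
proof -
  have c: "continuous_on UNIV (\<phi> (inv\<^bsub>G\<^esub> k))"
    using cont assms(3) grp by (simp add: group.inv_closed)
  show ?thesis unfolding img_eq[OF assms(3)]
    using open_vimage[OF assms(1) c] closed_vimage[OF assms(2) c] by simp
qed

lemma local_nbhd:
  assumes zd: "zero_dimensional (UNIV :: 'a set)"
    and free: "free_action G \<phi> UNIV"
    and K: "K \<subseteq> carrier G" "finite K" "\<one>\<^bsub>G\<^esub> \<notin> K"
  shows "\<exists>U. open U \<and> closed U \<and> x \<in> U \<and> (\<forall>k\<in>K. U \<inter> \<phi> k ` U = {})"
proof -
  have ex: "\<forall>k\<in>K. \<exists>ST. open (fst ST) \<and> open (snd ST) \<and> x \<in> fst ST \<and> \<phi> k x \<in> snd ST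
      \<and> fst ST \<inter> snd ST = {}"
  proof
    fix k assume k: "k \<in> K"
    have kc: "k \<in> carrier G" using k K(1) by blast
    have "k \<noteq> \<one>\<^bsub>G\<^esub>" using k K(3) by blast
    then have "\<phi> k x \<noteq> x" using free kc unfolding free_action_def by blast
    then have neq: "x \<noteq> \<phi> k x" by (rule not_sym)
    obtain S T where "open S" "open T" "x \<in> S" "\<phi> k x \<in> T" "S \<inter> T = {}"
      using separation_t2[THEN iffD1, OF neq] by blast
    then show "\<exists>ST. open (fst ST) \<and> open (snd ST) \<and> x \<in> fst ST \<and> \<phi> k x \<in> snd ST
      \<and> fst ST \<inter> snd ST = {}" by (intro exI[of _ "(S,T)"]) simp
  qed
  obtain ST where ST: "\<forall>k\<in>K. open (fst (ST k)) \<and> open (snd (ST k)) \<and> x \<in> fst (ST k)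
      \<and> \<phi> k x \<in> snd (ST k) \<and> fst (ST k) \<inter> snd (ST k) = {}"
    using bchoice[OF ex] by (rule exE)
  define A where "A = (\<Inter>k\<in>K. fst (ST k) \<inter> \<phi> k -` snd (ST k))"
  have "\<forall>k\<in>K. open (fst (ST k) \<inter> \<phi> k -` snd (ST k))"
  proof
    fix k assume k: "k \<in> K"
    have c: "continuous_on UNIV (\<phi> k)" using cont k K(1) by blast
    have "open (snd (ST k))" using ST k by blast
    then have "open (\<phi> k -` snd (ST k))" using c by (rule open_vimage)
    moreover have "open (fst (ST k))" using ST k by blast
    ultimately show "open (fst (ST k) \<inter> \<phi> k -` snd (ST k))" by (rule open_Int[rotated])
  qed
  then have oA: "open A" unfolding A_def using K(2) by (intro open_INT) simp_all
  have xA: "x \<in> A" unfolding A_def using ST by simp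
  have zd': "\<forall>(U::'a set) y. open U \<and> y \<in> U \<longrightarrow> (\<exists>V. open V \<and> closed V \<and> y \<in> V \<and> V \<subseteq> U)"
  proof (intro allI impI)
    fix U :: "'a set" and y :: 'a assume Uy: "open U \<and> y \<in> U"
    have h: "openin (top_of_set UNIV) U \<and> y \<in> U" using Uy by simp
    obtain V where V0: "openin (top_of_set UNIV) V \<and> closedin (top_of_set UNIV) V \<and> y \<in> V \<and> V \<subseteq> U"
      using zd[unfolded zero_dimensional_def, rule_format, OF h] by (rule exE)
    note V = conjunct1[OF V0] conjunct1[OF conjunct2[OF V0]] conjunct1[OF conjunct2[OF conjunct2[OF V0]]]
      conjunct2[OF conjunct2[OF conjunct2[OF V0]]]
    have "open V" using V(1) by simp
    moreover have "closed V" using V(2) by simp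
    ultimately show "\<exists>V. open V \<and> closed V \<and> y \<in> V \<and> V \<subseteq> U" using V(3,4) by blast
  qed
  obtain U where U: "open U" "closed U" "x \<in> U" "U \<subseteq> A"
    using zd' oA xA by blast
  have "open U" "closed U" using U by simp_all
  moreover have "\<forall>k\<in>K. U \<inter> \<phi> k ` U = {}"
  proof (intro ballI)
    fix k assume k: "k \<in> K"
    show "U \<inter> \<phi> k ` U = {}"
    proof (rule ccontr)
      assume "U \<inter> \<phi> k ` U \<noteq> {}"
      then obtain u where u: "u \<in> U" "\<phi> k u \<in> U" by blast
      have "u \<in> A" "\<phi> k u \<in> A" using u U(4) by blast+
      then have "\<phi> k u \<in> snd (ST k)" "\<phi> k u \<in> fst (ST k)" using k unfolding A_def by simp_all
      then show False using ST k by blast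
    qed
  qed
  ultimately show ?thesis using U(3) by blast
qed


lemma greedy:
  assumes "finite \<U>" and K: "K \<subseteq> carrier G" "finite K" "\<forall>k\<in>K. inv\<^bsub>G\<^esub> k \<in> K"
    and "\<forall>U\<in>\<U>. open U \<and> closed U \<and> (\<forall>k\<in>K. U \<inter> \<phi> k ` U = {})"
  shows "\<exists>V. open V \<and> closed V \<and> (\<forall>k\<in>K. V \<inter> \<phi> k ` V = {}) \<and>
             \<Union>\<U> \<subseteq> V \<union> (\<Union>k\<in>K. \<phi> k ` V)"
  using assms(1,5)
proof (induction \<U> rule: finite_induct)
  case empty
  show ?case by (rule exI[of _ "{}"]) simp
next
  case (insert U \<U>)
  have pr: "\<forall>U\<in>\<U>. open U \<and> closed U \<and> (\<forall>k\<in>K. U \<inter> \<phi> k ` U = {})"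
    using insert.prems by (meson insert_iff)
  obtain V where V0: "open V \<and> closed V \<and> (\<forall>k\<in>K. V \<inter> \<phi> k ` V = {}) \<and>
    \<Union>\<U> \<subseteq> V \<union> (\<Union>k\<in>K. \<phi> k ` V)" using insert.IH[OF pr] by (rule exE)
  note V = conjunct1[OF V0] conjunct1[OF conjunct2[OF V0]] conjunct1[OF conjunct2[OF conjunct2[OF V0]]]
    conjunct2[OF conjunct2[OF conjunct2[OF V0]]]
  have U: "open U" "closed U" "\<forall>k\<in>K. U \<inter> \<phi> k ` U = {}" using insert.prems by simp_all
  define B where "B = (\<Union>k\<in>K. \<phi> k ` V)"
  define W where "W = U - B"
  define V' where "V' = V \<union> W"
  have ocK: "\<forall>k\<in>K. open (\<phi> k ` V) \<and> closed (\<phi> k ` V)"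
    using clopen_img[OF V(1,2)] K(1) by blast
  have oB: "open B" unfolding B_def using ocK by (intro open_UN) simp
  have cB: "closed B" unfolding B_def using ocK K(2) by (intro closed_UN) simp_all
  have "open W" unfolding W_def using U(1) cB by (rule open_Diff)
  moreover have "closed W" unfolding W_def using U(2) oB by (rule closed_Diff)
  ultimately have o: "open V'" "closed V'" unfolding V'_def using V(1,2) by (auto intro: open_Un closed_Un)
  have d: "V' \<inter> \<phi> k ` V' = {}" if k: "k \<in> K" for k
  proof -
    have kc: "k \<in> carrier G" using k K(1) by blast
    have ik: "inv\<^bsub>G\<^esub> k \<in> K" using k K(3) by blast
    have 1: "V \<inter> \<phi> k ` W = {}"
    proof (rule ccontr)
      assume "V \<inter> \<phi> k ` W \<noteq> {}"
      then obtain w where w: "w \<in> W" "\<phi> k w \<in> V" by blast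
      have "w = \<phi> (inv\<^bsub>G\<^esub> k) (\<phi> k w)" using phi_inv1[OF kc] by simp
      then have "w \<in> \<phi> (inv\<^bsub>G\<^esub> k) ` V" using w(2) by blast
      then have "w \<in> B" unfolding B_def using ik by blast
      then show False using w(1) unfolding W_def by blast
    qed
    have 2: "W \<inter> \<phi> k ` V = {}" unfolding W_def B_def using k by blast
    have 3: "W \<inter> \<phi> k ` W = {}" using U(3) k unfolding W_def by blast
    have 4: "V \<inter> \<phi> k ` V = {}" using V(3) k by blast
    show ?thesis unfolding V'_def image_Un Int_Un_distrib Int_Un_distrib2 1 2 3 4 by simp
  qed
  define T where "T = V' \<union> (\<Union>k\<in>K. \<phi> k ` V')"
  have sub: "V \<union> B \<subseteq> T" unfolding T_def B_def V'_def by blast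
  have v'T: "V' \<subseteq> T" unfolding T_def by (rule Un_upper1)
  have uu: "U \<subseteq> V \<union> B \<union> V'" unfolding V'_def W_def by blast
  have v4: "\<Union>\<U> \<subseteq> V \<union> B" using V(4) unfolding B_def .
  have "U \<subseteq> T" using uu sub v'T by (meson Un_least subset_trans)
  moreover have "\<Union>\<U> \<subseteq> T" using v4 sub by (rule subset_trans)
  ultimately have cov: "\<Union>(insert U \<U>) \<subseteq> V' \<union> (\<Union>k\<in>K. \<phi> k ` V')"
    unfolding Union_insert T_def[symmetric] by (rule Un_least)
  show ?case by (rule exI[of _ V']) (use o d cov in simp)
qed

end

lemma eventually_subset:
  fixes F :: "nat \<Rightarrow> 'g set"
  assumes "finite P" "\<forall>p\<in>P. \<exists>m. \<forall>N\<ge>m. p \<in> F N"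
  shows "\<exists>m. \<forall>N\<ge>m. P \<subseteq> F N"
  using assms
proof (induction P rule: finite_induct)
  case empty then show ?case by auto
next
  case (insert p P)
  then obtain m1 where "\<forall>N\<ge>m1. P \<subseteq> F N" by auto
  moreover obtain m2 where "\<forall>N\<ge>m2. p \<in> F N" using insert.prems by auto
  ultimately show ?case
  proof (intro exI[of _ "max m1 m2"] allI impI)
    fix N assume "max m1 m2 \<le> N"
    then have "m1 \<le> N" "m2 \<le> N" by auto
    then show "insert p P \<subseteq> F N" using \<open>\<forall>N\<ge>m1. P \<subseteq> F N\<close> \<open>\<forall>N\<ge>m2. p \<in> F N\<close> by blast
  qed
qed

theorem mainTheorem4:
  fixes G :: "('g, 'b) monoid_scheme"
    and \<phi> :: "'g \<Rightarrow> 'a::metric_space \<Rightarrow> 'a"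
    and F :: "nat \<Rightarrow> 'g set"
  assumes "group G"
    and "countable (carrier G)"
    and "amenable G"
    and "compact (UNIV :: 'a set)"
    and "zero_dimensional (UNIV :: 'a set)"
    and "group_action G UNIV \<phi>"
    and "\<forall>g\<in>carrier G. continuous_on UNIV (\<phi> g)"
    and "free_action G \<phi> UNIV"
    and "foelner_seq G F"
    and "\<forall>n. \<one>\<^bsub>G\<^esub> \<in> F n"
    and "\<forall>n. F n \<subseteq> F (Suc n)"
    and "\<forall>g\<in>carrier G. \<exists>m. \<forall>n\<ge>m. g \<in> F n"
  shows "\<forall>n. \<exists>V :: 'a set. open V \<and> closed V \<and>
           disjoint_family_on (\<lambda>g. \<phi> g ` V) (F n) \<and>
           (\<exists>N\<ge>n. (\<Union>g\<in>F N. \<phi> g ` V) = UNIV)"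
proof
  fix n
  note grp = assms(1) and act = assms(6) and cont = assms(7)
  have F0: "\<forall>n. F n \<subseteq> carrier G \<and> finite (F n) \<and> F n \<noteq> {}"
    using assms(9) unfolding foelner_seq_def by (rule conjunct1)
  have Fn: "F n \<subseteq> carrier G" "finite (F n)" using F0 by simp_all
  define P where "P = (\<lambda>(g,h). inv\<^bsub>G\<^esub> g \<otimes>\<^bsub>G\<^esub> h) ` (F n \<times> F n)"
  define K where "K = P - {\<one>\<^bsub>G\<^esub>}"
  have Pc: "P \<subseteq> carrier G"
  proof
    fix p assume "p \<in> P"
    then obtain g h where gh: "g \<in> F n" "h \<in> F n" "p = inv\<^bsub>G\<^esub> g \<otimes>\<^bsub>G\<^esub> h"
      unfolding P_def by auto
    have "g \<in> carrier G" "h \<in> carrier G" using gh(1,2) Fn(1) by (auto simp only: subset_iff)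
    then show "p \<in> carrier G" unfolding gh(3) using grp
      by (simp add: group.inv_closed monoid.m_closed group.is_monoid)
  qed
  have Pf: "finite P" unfolding P_def using Fn(2) by simp
  have Kc: "K \<subseteq> carrier G" "finite K" "\<one>\<^bsub>G\<^esub> \<notin> K"
    using Pc Pf unfolding K_def by auto
  have Ks: "\<forall>k\<in>K. inv\<^bsub>G\<^esub> k \<in> K"
  proof
    fix k assume k: "k \<in> K"
    then have kP: "k \<in> P" and k1: "k \<noteq> \<one>\<^bsub>G\<^esub>" unfolding K_def by simp_all
    then obtain g h where gh: "g \<in> F n" "h \<in> F n" "k = inv\<^bsub>G\<^esub> g \<otimes>\<^bsub>G\<^esub> h"
      unfolding P_def by auto
    have gc: "g \<in> carrier G" "h \<in> carrier G" using gh(1,2) Fn(1) by (auto simp only: subset_iff)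
    have eq: "inv\<^bsub>G\<^esub> k = inv\<^bsub>G\<^esub> h \<otimes>\<^bsub>G\<^esub> g"
      using gc gh(3) grp by (simp add: group.inv_mult_group group.inv_closed group.inv_inv)
    have kc: "k \<in> carrier G" using Pc kP by (rule subsetD)
    have "inv\<^bsub>G\<^esub> k \<noteq> \<one>\<^bsub>G\<^esub>"
      using k1 kc grp by (simp add: group.inv_eq_1_iff)
    moreover have "inv\<^bsub>G\<^esub> k \<in> P" unfolding eq P_def using gh(1,2) by force
    ultimately show "inv\<^bsub>G\<^esub> k \<in> K" unfolding K_def by simp
  qed
  define \<T> where "\<T> = {U. open U \<and> closed U \<and> (\<forall>k\<in>K. U \<inter> \<phi> k ` U = {})}"
  have cov: "UNIV \<subseteq> \<Union>\<T>"
  proof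
    fix x :: 'a
    obtain U where U: "open U \<and> closed U \<and> x \<in> U \<and> (\<forall>k\<in>K. U \<inter> \<phi> k ` U = {})"
      using local_nbhd[OF grp act cont assms(5,8) Kc, of x] by (rule exE)
    then have "U \<in> \<T>" unfolding \<T>_def by simp
    moreover have "x \<in> U" using U by simp
    ultimately show "x \<in> \<Union>\<T>" by (rule UnionI)
  qed
  have opn: "\<And>B. B \<in> \<T> \<Longrightarrow> open B" unfolding \<T>_def by simp
  obtain \<T>' where T': "\<T>' \<subseteq> \<T>" "finite \<T>'" "UNIV \<subseteq> \<Union>\<T>'"
    by (rule compactE[OF assms(4) cov opn])
  have T'p: "\<forall>U\<in>\<T>'. open U \<and> closed U \<and> (\<forall>k\<in>K. U \<inter> \<phi> k ` U = {})"
  proof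
    fix U assume "U \<in> \<T>'"
    then have "U \<in> \<T>" using T'(1) by (rule subsetD[rotated])
    then show "open U \<and> closed U \<and> (\<forall>k\<in>K. U \<inter> \<phi> k ` U = {})" unfolding \<T>_def by simp
  qed
  obtain V where V0: "open V \<and> closed V \<and> (\<forall>k\<in>K. V \<inter> \<phi> k ` V = {}) \<and>
      \<Union>\<T>' \<subseteq> V \<union> (\<Union>k\<in>K. \<phi> k ` V)"
    using greedy[OF grp act cont T'(2) Kc(1,2) Ks T'p] by (rule exE)
  note V = conjunct1[OF V0] conjunct1[OF conjunct2[OF V0]] conjunct1[OF conjunct2[OF conjunct2[OF V0]]]
      conjunct2[OF conjunct2[OF conjunct2[OF V0]]]
  have disj: "disjoint_family_on (\<lambda>g. \<phi> g ` V) (F n)"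
    unfolding disjoint_family_on_def
  proof (intro ballI impI)
    fix g h assume gh: "g \<in> F n" "h \<in> F n" "g \<noteq> h"
    have gc: "g \<in> carrier G" "h \<in> carrier G" using gh(1,2) Fn(1) by (auto simp only: subset_iff)
    show "\<phi> g ` V \<inter> \<phi> h ` V = {}"
    proof (rule ccontr)
      assume "\<phi> g ` V \<inter> \<phi> h ` V \<noteq> {}"
      then obtain y where "y \<in> \<phi> g ` V" "y \<in> \<phi> h ` V" by blast
      then obtain a b where ab: "a \<in> V" "b \<in> V" "\<phi> g a = \<phi> h b" by (auto simp only: image_iff)
      define k where "k = inv\<^bsub>G\<^esub> g \<otimes>\<^bsub>G\<^esub> h"
      have "g \<otimes>\<^bsub>G\<^esub> k = h" unfolding k_def using gc grp
        by (simp add: group.inv_closed monoid.m_assoc[symmetric] group.is_monoid group.r_inv monoid.l_one)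
      then have "k \<noteq> \<one>\<^bsub>G\<^esub>" using gh(3) gc grp by (auto simp: group.is_monoid monoid.r_one)
      moreover have "k \<in> P" unfolding k_def P_def using gh(1,2) by force
      ultimately have kK: "k \<in> K" unfolding K_def by simp
      have kc: "k \<in> carrier G" unfolding k_def using gc grp
        by (simp add: group.inv_closed monoid.m_closed group.is_monoid)
      have "a = \<phi> (inv\<^bsub>G\<^esub> g) (\<phi> g a)" using phi_inv1[OF grp act cont gc(1)] by simp
      also have "\<dots> = \<phi> (inv\<^bsub>G\<^esub> g) (\<phi> h b)" using ab(3) by simp
      also have "\<dots> = \<phi> k b" unfolding k_def using phi_comp[OF grp act cont, of "inv\<^bsub>G\<^esub> g" h b] gc grp
        by (simp add: group.inv_closed)
      finally have "a \<in> \<phi> k ` V" using ab(2) by (simp only: image_eqI)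
      then have "a \<in> V \<inter> \<phi> k ` V" using ab(1) by (rule IntI[rotated])
      then show False using V(3) kK by auto
    qed
  qed
  have ev: "\<forall>p\<in>P. \<exists>m. \<forall>N\<ge>m. p \<in> F N"
  proof
    fix p assume "p \<in> P"
    then have "p \<in> carrier G" using Pc by (rule subsetD[rotated])
    then show "\<exists>m. \<forall>N\<ge>m. p \<in> F N" using assms(12) by (rule bspec[rotated])
  qed
  obtain m where m: "\<forall>N\<ge>m. P \<subseteq> F N" using eventually_subset[OF Pf ev] by (rule exE)
  define N where "N = max m n"
  have "m \<le> N" unfolding N_def by simp
  then have PN: "P \<subseteq> F N" using m by simp
  have nN: "n \<le> N" unfolding N_def by simp
  have sub1: "V \<subseteq> (\<Union>g\<in>F N. \<phi> g ` V)"
  proof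
    fix v assume "v \<in> V"
    then have "\<phi> \<one>\<^bsub>G\<^esub> v \<in> \<phi> \<one>\<^bsub>G\<^esub> ` V" by (rule imageI)
    then have "v \<in> \<phi> \<one>\<^bsub>G\<^esub> ` V" using phi_one[OF grp act cont, of v] by simp
    moreover have "\<one>\<^bsub>G\<^esub> \<in> F N" using assms(10) by simp
    ultimately show "v \<in> (\<Union>g\<in>F N. \<phi> g ` V)" by (rule UN_I[rotated])
  qed
  have sub2: "(\<Union>k\<in>K. \<phi> k ` V) \<subseteq> (\<Union>g\<in>F N. \<phi> g ` V)"
  proof (rule UN_mono)
    show "K \<subseteq> F N" using PN unfolding K_def by blast
  qed simp
  have "UNIV \<subseteq> (\<Union>g\<in>F N. \<phi> g ` V)"
    using T'(3) V(4) sub1 sub2 by (meson Un_least subset_trans)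
  then have "(\<Union>g\<in>F N. \<phi> g ` V) = UNIV" by (rule top_le)
  then have "\<exists>N\<ge>n. (\<Union>g\<in>F N. \<phi> g ` V) = UNIV" using nN by blast
  then show "\<exists>V :: 'a set. open V \<and> closed V \<and>
           disjoint_family_on (\<lambda>g. \<phi> g ` V) (F n) \<and>
           (\<exists>N\<ge>n. (\<Union>g\<in>F N. \<phi> g ` V) = UNIV)"
    using V(1,2) disj by (intro exI[of _ V] conjI)
qed

end
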